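(* Consider the multidimensional robust Bayesian persuasion setting described in the context. For every $k$, every $n_1,\dots,n_k$, and every product prior $\mu=\mu_1\times\cdots\times\mu_k$ (with $\mu_j\in\Delta([n_j])$) of full support, $\mathrm{Reg}_{\mathrm{MON\text{-}MD}}\le 1-2^{-k}$.
   Context: Setting: the state space is $\Omega=\prod_{j=1}^k [n_j]$ with a publicly known prior $\mu\in\Delta(\Omega)$ assigning positive probability to every state. A signaling scheme is a stochastic map $\pi$ from $\Omega$ to a (finite or infinite) signal set $S$; Sender commits to $\pi$, the state $\omega\sim\mu$ is drawn, a signal $s\sim\pi(\omega)$ is sent, and Receiver forms the Bayesian posterior $p(s)\in\Delta(\Omega)$. Receiver has actions $\{0,1\}$ (reject/adopt) and utility $u_r:\Omega\times\{0,1\}\to\mathbb{R}$ with $u_r(\omega,0)=0$ for all $\omega$; Receiver adopts at posterior $p$ iff $\mathbb{E}_{\omega'\sim p}[u_r(\omega',1)]\ge 0$ (ties broken in favor of adoption). Sender's utility is $u(\pi,u_r)=\Pr_s[\text{Receiver adopts at }p(s)]$, and $u^*(u_r)=\sup_\pi u(\pi,u_r)$. $\mathrm{Reg}_{\mathrm{MON\text{-}MD}}=\inf_\pi\sup_{u_r\in\mathcal{U}}\{u^*(u_r)-u(\pi,u_r)\}$, where $\mathcal{U}$ is the class of Receiver utilities such that $u_r(\cdot,1)$ is non-decreasing in each coordinate: for every $j$, every $\omega'_j\le\omega''_j$ and every $\omega_{-j}$, $u_r((\omega'_j,\omega_{-j}),1)\le u_r((\omega''_j,\omega_{-j}),1)$.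 *)

theory Defs
  imports "HOL-Probability.Probability"
begin

definition states :: "nat \<Rightarrow> (nat \<Rightarrow> nat) \<Rightarrow> (nat \<Rightarrow> nat) set" where
  "states k n = PiE {..<k} (\<lambda>j. {..<n j})"

definition prod_prior :: "nat \<Rightarrow> (nat \<Rightarrow> nat \<Rightarrow> real) \<Rightarrow> (nat \<Rightarrow> nat) \<Rightarrow> real" where
  "prod_prior k m \<omega> = (\<Prod>j<k. m j (\<omega> j))"

definition sig_prob :: "('w set) \<Rightarrow> ('w \<Rightarrow> real) \<Rightarrow> ('w \<Rightarrow> nat pmf) \<Rightarrow> nat \<Rightarrow> real" where
  "sig_prob \<Omega> \<mu> \<pi> s = (\<Sum>\<omega>\<in>\<Omega>. \<mu> \<omega> * pmf (\<pi> \<omega>) s)"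

definition posterior :: "('w set) \<Rightarrow> ('w \<Rightarrow> real) \<Rightarrow> ('w \<Rightarrow> nat pmf) \<Rightarrow> nat \<Rightarrow> 'w \<Rightarrow> real" where
  "posterior \<Omega> \<mu> \<pi> s \<omega> = \<mu> \<omega> * pmf (\<pi> \<omega>) s / sig_prob \<Omega> \<mu> \<pi> s"

text \<open>Receiver adopts at posterior p iff E_{p}[u_r(.,1)] >= 0 (ties favour adoption);
  u :: state => real stands for u_r(.,1) (u_r(.,0) = 0).\<close>
definition adopts :: "('w set) \<Rightarrow> ('w \<Rightarrow> real) \<Rightarrow> ('w \<Rightarrow> nat pmf) \<Rightarrow> ('w \<Rightarrow> real) \<Rightarrow> nat \<Rightarrow> bool" where
  "adopts \<Omega> \<mu> \<pi> u s \<longleftrightarrow> (\<Sum>\<omega>\<in>\<Omega>. posterior \<Omega> \<mu> \<pi> s \<omega> * u \<omega>) \<ge> 0"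

definition sender_util :: "('w set) \<Rightarrow> ('w \<Rightarrow> real) \<Rightarrow> ('w \<Rightarrow> nat pmf) \<Rightarrow> ('w \<Rightarrow> real) \<Rightarrow> real" where
  "sender_util \<Omega> \<mu> \<pi> u = (\<Sum>\<omega>\<in>\<Omega>. \<mu> \<omega> * measure_pmf.prob (\<pi> \<omega>) {s. adopts \<Omega> \<mu> \<pi> u s})"

definition opt_util :: "('w set) \<Rightarrow> ('w \<Rightarrow> real) \<Rightarrow> ('w \<Rightarrow> real) \<Rightarrow> real" where
  "opt_util \<Omega> \<mu> u = (SUP \<pi>. sender_util \<Omega> \<mu> \<pi> u)"

definition mon_utils :: "nat \<Rightarrow> (nat \<Rightarrow> nat) \<Rightarrow> ((nat \<Rightarrow> nat) \<Rightarrow> real) set" where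
  "mon_utils k n = {u. \<forall>\<omega>\<in>states k n. \<forall>j<k. \<forall>a b. a \<le> b \<and> b < n j \<longrightarrow>
                          u (fun_upd \<omega> j a) \<le> u (fun_upd \<omega> j b)}"

definition reg_mon_md :: "nat \<Rightarrow> (nat \<Rightarrow> nat) \<Rightarrow> ((nat \<Rightarrow> nat) \<Rightarrow> real) \<Rightarrow> real" where
  "reg_mon_md k n \<mu> = (INF \<pi>. SUP u\<in>mon_utils k n.
      opt_util (states k n) \<mu> u - sender_util (states k n) \<mu> \<pi> u)"

end

theory Submission
  imports Defs
begin

definition monoP :: "nat set \<Rightarrow> (nat \<Rightarrow> nat) \<Rightarrow> ((nat \<Rightarrow> nat) \<Rightarrow> real) \<Rightarrow> bool" where
  "monoP I n \<phi> \<longleftrightarrow> (\<forall>\<omega>\<in>PiE I (\<lambda>j. {..<n j}). \<forall>j\<in>I. \<forall>a b. a \<le> b \<and> b < n j \<longrightarrow>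
      \<phi> (fun_upd \<omega> j a) \<le> \<phi> (fun_upd \<omega> j b))"

lemma sum_PiE_insert:
  assumes "finite I" "k \<notin> I" "\<And>j. finite (A j)"
  shows "(\<Sum>g\<in>PiE (insert k I) A. F g) = (\<Sum>y\<in>A k. \<Sum>g\<in>PiE I A. F (g(k := y)))"
proof -
  have "(\<Sum>g\<in>PiE (insert k I) A. F g) = (\<Sum>g\<in>(\<lambda>(y, g). g(k := y)) ` (A k \<times> PiE I A). F g)"
    by (simp add: PiE_insert_eq)
  also have "\<dots> = (\<Sum>(y,g)\<in>A k \<times> PiE I A. F (g(k := y)))"
    by (subst sum.reindex[OF inj_combinator[OF assms(2)]]) (simp add: case_prod_unfold)
  also have "\<dots> = (\<Sum>y\<in>A k. \<Sum>g\<in>PiE I A. F (g(k := y)))"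
    by (subst sum.cartesian_product) simp
  finally show ?thesis .
qed

lemma dom1:
  fixes h l \<psi> :: "nat \<Rightarrow> real"
  assumes "p < N" "\<forall>i<N. 0 \<le> h i \<and> 0 \<le> l i" "\<forall>i<N. i < p \<longrightarrow> h i = 0"
    "\<forall>i<N. p < i \<longrightarrow> l i = 0" "(\<Sum>i<N. h i) = (\<Sum>i<N. l i)"
    "\<forall>a b. a \<le> b \<and> b < N \<longrightarrow> \<psi> a \<le> \<psi> b"
  shows "(\<Sum>i<N. l i * \<psi> i) \<le> (\<Sum>i<N. h i * \<psi> i)"
proof -
  have "0 \<le> (\<Sum>i<N. (h i - l i) * (\<psi> i - \<psi> p))"
  proof (rule sum_nonneg)
    fix i assume i: "i \<in> {..<N}"
    consider "i < p" | "i = p" | "p < i" by linarith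
    then show "0 \<le> (h i - l i) * (\<psi> i - \<psi> p)"
    proof cases
      case 1
      then have "h i = 0" "\<psi> i \<le> \<psi> p" "0 \<le> l i" using assms i by auto
      then show ?thesis by (simp add: mult_nonneg_nonpos)
    next
      case 2 then show ?thesis by simp
    next
      case 3
      then have "l i = 0" "\<psi> p \<le> \<psi> i" "0 \<le> h i" using assms i by auto
      then show ?thesis by simp
    qed
  qed
  also have "\<dots> = (\<Sum>i<N. h i * \<psi> i) - (\<Sum>i<N. l i * \<psi> i) - \<psi> p * ((\<Sum>i<N. h i) - (\<Sum>i<N. l i))"
    by (simp add: algebra_simps sum_subtractf sum_distrib_left sum.distrib)
  finally show ?thesis using assms(5) by simp
qed

definition hsplit :: "nat set \<Rightarrow> (nat \<Rightarrow> nat) \<Rightarrow> (nat \<Rightarrow> nat \<Rightarrow> real) \<Rightarrow> (nat \<Rightarrow> nat \<Rightarrow> real) \<Rightarrow> (nat \<Rightarrow> nat) \<Rightarrow> bool" where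
  "hsplit I n h l p \<longleftrightarrow> (\<forall>j\<in>I. p j < n j \<and> (\<forall>i<n j. 0 \<le> h j i \<and> 0 \<le> l j i) \<and>
     (\<forall>i<n j. i < p j \<longrightarrow> h j i = 0) \<and> (\<forall>i<n j. p j < i \<longrightarrow> l j i = 0) \<and>
     (\<Sum>i<n j. h j i) = (\<Sum>i<n j. l j i))"

definition WS :: "nat set \<Rightarrow> (nat \<Rightarrow> nat) \<Rightarrow> (nat \<Rightarrow> nat \<Rightarrow> real) \<Rightarrow> ((nat \<Rightarrow> nat) \<Rightarrow> real) \<Rightarrow> real" where
  "WS I n w \<phi> = (\<Sum>\<omega>\<in>PiE I (\<lambda>j. {..<n j}). (\<Prod>j\<in>I. w j (\<omega> j)) * \<phi> \<omega>)"

lemma WS_insert: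
  assumes "finite I" "k \<notin> I"
  shows "WS (insert k I) n w \<phi> = (\<Sum>y<n k. w k y * WS I n w (\<lambda>\<omega>. \<phi> (fun_upd \<omega> k y)))"
proof -
  have "WS (insert k I) n w \<phi> = (\<Sum>y<n k. \<Sum>\<omega>\<in>PiE I (\<lambda>j. {..<n j}).
          (\<Prod>j\<in>insert k I. w j ((fun_upd \<omega> k y) j)) * \<phi> (fun_upd \<omega> k y))"
    unfolding WS_def by (subst sum_PiE_insert[OF assms]) auto
  also have "\<dots> = (\<Sum>y<n k. \<Sum>\<omega>\<in>PiE I (\<lambda>j. {..<n j}).
          w k y * ((\<Prod>j\<in>I. w j (\<omega> j)) * \<phi> (fun_upd \<omega> k y)))"
  proof (intro sum.cong refl)
    fix y \<omega>
    have "(\<Prod>j\<in>insert k I. w j ((fun_upd \<omega> k y) j)) = w k y * (\<Prod>j\<in>I. w j ((fun_upd \<omega> k y) j))"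
      using assms by (simp add: prod.insert)
    also have "(\<Prod>j\<in>I. w j ((fun_upd \<omega> k y) j)) = (\<Prod>j\<in>I. w j (\<omega> j))"
      using assms by (intro prod.cong) auto
    finally show "(\<Prod>j\<in>insert k I. w j ((fun_upd \<omega> k y) j)) * \<phi> (fun_upd \<omega> k y) =
          w k y * ((\<Prod>j\<in>I. w j (\<omega> j)) * \<phi> (fun_upd \<omega> k y))" by simp
  qed
  also have "\<dots> = (\<Sum>y<n k. w k y * WS I n w (\<lambda>\<omega>. \<phi> (fun_upd \<omega> k y)))"
    unfolding WS_def by (simp add: sum_distrib_left)
  finally show ?thesis .
qed

lemma monoP_slice:
  assumes "monoP (insert k I) n \<phi>" "k \<notin> I" "y < n k"
  shows "monoP I n (\<lambda>\<omega>. \<phi> (fun_upd \<omega> k y))"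
  unfolding monoP_def
proof (intro ballI allI impI)
  fix \<omega> j a b
  assume \<omega>: "\<omega> \<in> PiE I (\<lambda>j. {..<n j})" and j: "j \<in> I" and ab: "a \<le> b \<and> b < n j"
  have jk: "j \<noteq> k" using j assms(2) by auto
  have m: "fun_upd \<omega> k y \<in> PiE (insert k I) (\<lambda>j. {..<n j})"
    using \<omega> assms(3) by (intro PiE_fun_upd) auto
  have "\<phi> (fun_upd (fun_upd \<omega> k y) j a) \<le> \<phi> (fun_upd (fun_upd \<omega> k y) j b)"
    using assms(1) m j ab unfolding monoP_def by blast
  moreover have "fun_upd (fun_upd \<omega> k y) j a = fun_upd (fun_upd \<omega> j a) k y"
    "fun_upd (fun_upd \<omega> k y) j b = fun_upd (fun_upd \<omega> j b) k y"
    using jk by (auto simp: fun_upd_twist)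
  ultimately show "\<phi> (fun_upd (fun_upd \<omega> j a) k y) \<le> \<phi> (fun_upd (fun_upd \<omega> j b) k y)" by simp
qed

lemma WS_mono_k:
  assumes "monoP (insert k I) n \<phi>" "k \<notin> I" "\<forall>j\<in>I. \<forall>i<n j. 0 \<le> w j i"
  shows "\<forall>a b. a \<le> b \<and> b < n k \<longrightarrow> WS I n w (\<lambda>\<omega>. \<phi> (fun_upd \<omega> k a)) \<le> WS I n w (\<lambda>\<omega>. \<phi> (fun_upd \<omega> k b))"
proof (intro allI impI)
  fix a b assume ab: "a \<le> b \<and> b < n k"
  show "WS I n w (\<lambda>\<omega>. \<phi> (fun_upd \<omega> k a)) \<le> WS I n w (\<lambda>\<omega>. \<phi> (fun_upd \<omega> k b))"
    unfolding WS_def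
  proof (rule sum_mono)
    fix \<omega> assume \<omega>: "\<omega> \<in> PiE I (\<lambda>j. {..<n j})"
    have m: "fun_upd \<omega> k a \<in> PiE (insert k I) (\<lambda>j. {..<n j})"
      using \<omega> ab by (intro PiE_fun_upd) auto
    have "\<phi> (fun_upd (fun_upd \<omega> k a) k a) \<le> \<phi> (fun_upd (fun_upd \<omega> k a) k b)"
      using assms(1) m ab unfolding monoP_def by blast
    then have "\<phi> (fun_upd \<omega> k a) \<le> \<phi> (fun_upd \<omega> k b)" by simp
    moreover have "0 \<le> (\<Prod>j\<in>I. w j (\<omega> j))"
      using \<omega> assms(3) by (intro prod_nonneg) (auto simp: PiE_def Pi_def)
    ultimately show "(\<Prod>j\<in>I. w j (\<omega> j)) * \<phi> (fun_upd \<omega> k a) \<le> (\<Prod>j\<in>I. w j (\<omega> j)) * \<phi> (fun_upd \<omega> k b)"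
      by (simp add: mult_left_mono)
  qed
qed

lemma hsplit_insert: "hsplit (insert k I) n h l p \<Longrightarrow> hsplit I n h l p"
  unfolding hsplit_def by auto

lemma domD:
  assumes "finite I" "hsplit I n h l p" "monoP I n \<phi>"
  shows "WS I n l \<phi> \<le> WS I n h \<phi>"
  using assms
proof (induction I arbitrary: \<phi> rule: finite_induct)
  case empty
  then show ?case by (simp add: WS_def)
next
  case (insert k I)
  have hs: "hsplit I n h l p" using insert.prems hsplit_insert by blast
  have hk: "p k < n k" "\<forall>i<n k. 0 \<le> h k i \<and> 0 \<le> l k i" "\<forall>i<n k. i < p k \<longrightarrow> h k i = 0"
    "\<forall>i<n k. p k < i \<longrightarrow> l k i = 0" "(\<Sum>i<n k. h k i) = (\<Sum>i<n k. l k i)"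
    using insert.prems(1) unfolding hsplit_def by auto
  have "WS (insert k I) n l \<phi> = (\<Sum>y<n k. l k y * WS I n l (\<lambda>\<omega>. \<phi> (fun_upd \<omega> k y)))"
    using insert.hyps by (rule WS_insert)
  also have "\<dots> \<le> (\<Sum>y<n k. l k y * WS I n h (\<lambda>\<omega>. \<phi> (fun_upd \<omega> k y)))"
  proof (rule sum_mono)
    fix y assume y: "y \<in> {..<n k}"
    have "WS I n l (\<lambda>\<omega>. \<phi> (fun_upd \<omega> k y)) \<le> WS I n h (\<lambda>\<omega>. \<phi> (fun_upd \<omega> k y))"
      using insert.IH[OF hs monoP_slice[OF insert.prems(2) insert.hyps(2)]] y by (simp only: lessThan_iff)
    then show "l k y * WS I n l (\<lambda>\<omega>. \<phi> (fun_upd \<omega> k y)) \<le> l k y * WS I n h (\<lambda>\<omega>. \<phi> (fun_upd \<omega> k y))"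
      using hk(2) y by (simp add: mult_left_mono)
  qed
  also have "\<dots> \<le> (\<Sum>y<n k. h k y * WS I n h (\<lambda>\<omega>. \<phi> (fun_upd \<omega> k y)))"
  proof (rule dom1[OF hk(1,2,3,4,5)])
    show "\<forall>a b. a \<le> b \<and> b < n k \<longrightarrow> WS I n h (\<lambda>\<omega>. \<phi> (fun_upd \<omega> k a)) \<le> WS I n h (\<lambda>\<omega>. \<phi> (fun_upd \<omega> k b))"
      using WS_mono_k[OF insert.prems(2) insert.hyps(2)] hs unfolding hsplit_def by blast
  qed
  also have "\<dots> = WS (insert k I) n h \<phi>"
    using insert.hyps by (rule WS_insert[symmetric])
  finally show ?case .
qed

lemma domM:
  assumes "finite I" "hsplit I n h l p" "monoP I n \<phi>"
  shows "WS I n (\<lambda>j i. h j i + l j i) \<phi> - WS I n l \<phi> \<le> (2 ^ card I - 1) * WS I n h \<phi>"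
  using assms
proof (induction I arbitrary: \<phi> rule: finite_induct)
  case empty
  then show ?case by (simp add: WS_def)
next
  case (insert k I)
  define F where "F y = WS I n (\<lambda>j i. h j i + l j i) (\<lambda>\<omega>. \<phi> (fun_upd \<omega> k y))" for y
  define G where "G y = WS I n l (\<lambda>\<omega>. \<phi> (fun_upd \<omega> k y))" for y
  define H where "H y = WS I n h (\<lambda>\<omega>. \<phi> (fun_upd \<omega> k y))" for y
  define c :: real where "c = 2 ^ card I"
  have c1: "1 \<le> c" unfolding c_def by simp
  have hs: "hsplit I n h l p" using insert.prems hsplit_insert by blast
  have hk: "p k < n k" "\<forall>i<n k. 0 \<le> h k i \<and> 0 \<le> l k i" "\<forall>i<n k. i < p k \<longrightarrow> h k i = 0"
    "\<forall>i<n k. p k < i \<longrightarrow> l k i = 0" "(\<Sum>i<n k. h k i) = (\<Sum>i<n k. l k i)"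
    using insert.prems(1) unfolding hsplit_def by auto
  have FGH: "F y - G y \<le> (c - 1) * H y" "G y \<le> H y" if "y < n k" for y
    using insert.IH[OF hs monoP_slice[OF insert.prems(2) insert.hyps(2) that]]
      domD[OF insert.hyps(1) hs monoP_slice[OF insert.prems(2) insert.hyps(2) that]]
    unfolding F_def G_def H_def c_def by (simp_all del: fun_upd_apply)
  have Hmono: "\<forall>a b. a \<le> b \<and> b < n k \<longrightarrow> H a \<le> H b"
    using WS_mono_k[OF insert.prems(2) insert.hyps(2)] hs unfolding hsplit_def H_def by blast
  have "WS (insert k I) n (\<lambda>j i. h j i + l j i) \<phi> - WS (insert k I) n l \<phi>
      = (\<Sum>y<n k. (h k y + l k y) * F y) - (\<Sum>y<n k. l k y * G y)"
    unfolding F_def G_def using insert.hyps by (simp add: WS_insert)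
  also have "\<dots> = (\<Sum>y<n k. h k y * F y) + (\<Sum>y<n k. l k y * (F y - G y))"
    by (simp add: algebra_simps sum.distrib sum_subtractf)
  also have "\<dots> \<le> (\<Sum>y<n k. h k y * (c * H y)) + (\<Sum>y<n k. l k y * ((c - 1) * H y))"
  proof (intro add_mono sum_mono)
    fix y assume y: "y \<in> {..<n k}"
    then have y': "y < n k" by simp
    show "h k y * F y \<le> h k y * (c * H y)"
      using FGH[OF y'] hk(2) y' by (intro mult_left_mono) (auto simp: algebra_simps)
    show "l k y * (F y - G y) \<le> l k y * ((c - 1) * H y)"
      using FGH[OF y'] hk(2) y' by (intro mult_left_mono) auto
  qed
  also have "(\<Sum>y<n k. h k y * (c * H y)) + (\<Sum>y<n k. l k y * ((c - 1) * H y))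
      = c * (\<Sum>y<n k. h k y * H y) + (c - 1) * (\<Sum>y<n k. l k y * H y)"
    by (simp add: sum_distrib_left algebra_simps)
  also have "\<dots> \<le> c * (\<Sum>y<n k. h k y * H y) + (c - 1) * (\<Sum>y<n k. h k y * H y)"
    using dom1[OF hk Hmono] c1 by (intro add_left_mono mult_left_mono) auto
  also have "c * (\<Sum>y<n k. h k y * H y) + (c - 1) * (\<Sum>y<n k. h k y * H y)
      = (2 ^ card (insert k I) - 1) * WS (insert k I) n h \<phi>"
    using insert.hyps by (simp add: WS_insert H_def c_def algebra_simps)
  finally show ?case .
qed

lemma monoP_chain_aux:
  assumes "finite S"
  shows "monoP I n u \<Longrightarrow> S \<subseteq> I \<Longrightarrow> \<omega> \<in> PiE I (\<lambda>j. {..<n j}) \<Longrightarrow> \<omega>' \<in> PiE I (\<lambda>j. {..<n j}) \<Longrightarrow>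
    (\<forall>j\<in>I. \<omega> j \<le> \<omega>' j) \<Longrightarrow> (\<forall>j\<in>I - S. \<omega> j = \<omega>' j) \<Longrightarrow> u \<omega> \<le> u \<omega>'"
  using assms
proof (induction S arbitrary: \<omega>' rule: finite_induct)
  case empty
  then have "\<omega> = \<omega>'" by (intro PiE_ext) auto
  then show ?case by simp
next
  case (insert s S)
  define \<omega>'' where "\<omega>'' = fun_upd \<omega>' s (\<omega> s)"
  have sI: "s \<in> I" using insert.prems by auto
  have m'': "\<omega>'' \<in> PiE I (\<lambda>j. {..<n j})"
    unfolding \<omega>''_def using insert.prems sI
    by (metis (no_types, lifting) PiE_E PiE_fun_upd insert_absorb)
  have "u \<omega> \<le> u \<omega>''"
  proof (rule insert.IH[OF insert.prems(1) _ insert.prems(3) m''])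
    show "S \<subseteq> I" using insert.prems(2) by auto
    show "\<forall>j\<in>I. \<omega> j \<le> \<omega>'' j" using insert.prems(5) unfolding \<omega>''_def by auto
    show "\<forall>j\<in>I - S. \<omega> j = \<omega>'' j" using insert.prems(6) unfolding \<omega>''_def by auto
  qed
  also have "u \<omega>'' \<le> u (fun_upd \<omega>'' s (\<omega>' s))"
  proof -
    have "u (fun_upd \<omega>'' s (\<omega> s)) \<le> u (fun_upd \<omega>'' s (\<omega>' s))"
      using insert.prems(1) m'' sI insert.prems(4,5) unfolding monoP_def
      by (meson PiE_E lessThan_iff)
    moreover have "fun_upd \<omega>'' s (\<omega> s) = \<omega>''" unfolding \<omega>''_def by simp
    ultimately show ?thesis by simp
  qed
  also have "fun_upd \<omega>'' s (\<omega>' s) = \<omega>'" unfolding \<omega>''_def by simp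
  finally show ?case .
qed

lemma monoP_chain:
  assumes "finite I" "monoP I n u" "\<omega> \<in> PiE I (\<lambda>j. {..<n j})" "\<omega>' \<in> PiE I (\<lambda>j. {..<n j})"
    "\<forall>j\<in>I. \<omega> j \<le> \<omega>' j"
  shows "u \<omega> \<le> u \<omega>'"
  using monoP_chain_aux[OF assms(1) assms(2) order_refl assms(3,4,5)] by simp

lemma split_exists:
  fixes m :: "nat \<Rightarrow> real"
  shows "0 < N \<Longrightarrow> (\<forall>i<N. 0 \<le> m i) \<Longrightarrow> 0 \<le> c \<Longrightarrow> c \<le> (\<Sum>i<N. m i) \<Longrightarrow>
    \<exists>p h. p < N \<and> (\<forall>i<N. 0 \<le> h i \<and> h i \<le> m i) \<and> (\<Sum>i<N. h i) = c \<and>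
      (\<forall>i<N. i < p \<longrightarrow> h i = 0) \<and> (\<forall>i<N. p < i \<longrightarrow> h i = m i)"
proof (induction N arbitrary: c)
  case 0
  then show ?case by simp
next
  case (Suc N)
  show ?case
  proof (cases "c \<le> m N")
    case True
    define h where "h = (\<lambda>i. if i = N then c else (0::real))"
    have "(\<Sum>i<Suc N. h i) = c" unfolding h_def by (simp add: sum.If_cases)
    then show ?thesis using True Suc.prems
      by (intro exI[of _ N] exI[of _ h]) (auto simp: h_def)
  next
    case False
    then have N0: "0 < N" using Suc.prems by (cases N) auto
    obtain p h where ph: "p < N" "\<forall>i<N. 0 \<le> h i \<and> h i \<le> m i" "(\<Sum>i<N. h i) = c - m N"
      "\<forall>i<N. i < p \<longrightarrow> h i = 0" "\<forall>i<N. p < i \<longrightarrow> h i = m i"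
      using Suc.IH[OF N0, of "c - m N"] Suc.prems False by auto
    define h' where "h' = fun_upd h N (m N)"
    have "(\<Sum>i<Suc N. h' i) = (\<Sum>i<N. h i) + m N"
      unfolding h'_def by (simp add: sum.cong[of "{..<N}" "{..<N}" "fun_upd h N (m N)" h])
    then show ?thesis using ph Suc.prems
      by (intro exI[of _ p] exI[of _ h']) (auto simp: h'_def less_Suc_eq)
  qed
qed


lemma infsetsum_sum_fin:
  assumes "finite W" "\<And>w. w \<in> W \<Longrightarrow> Infinite_Set_Sum.abs_summable_on (f w) A"
  shows "infsetsum (\<lambda>s. \<Sum>w\<in>W. f w s) A = (\<Sum>w\<in>W. infsetsum (f w) A)"
  using assms unfolding infsetsum_def abs_summable_on_def
  by (intro Bochner_Integration.integral_sum) auto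

lemma key_nonneg:
  fixes \<Omega> :: "'w set" and \<mu> :: "'w \<Rightarrow> real"
  assumes fin: "finite \<Omega>" and mu: "\<forall>\<omega>\<in>\<Omega>. 0 \<le> \<mu> \<omega>"
  shows "0 \<le> (\<Sum>\<omega>\<in>\<Omega>. \<mu> \<omega> * measure_pmf.prob (\<pi> \<omega>) {s. adopts \<Omega> \<mu> \<pi> u s} * u \<omega>)"
proof -
  define A where "A = {s. adopts \<Omega> \<mu> \<pi> u s}"
  have "(\<Sum>\<omega>\<in>\<Omega>. \<mu> \<omega> * measure_pmf.prob (\<pi> \<omega>) A * u \<omega>)
      = (\<Sum>\<omega>\<in>\<Omega>. infsetsum (\<lambda>s. (\<mu> \<omega> * u \<omega>) * pmf (\<pi> \<omega>) s) A)"
    by (intro sum.cong refl) (simp add: measure_pmf_conv_infsetsum infsetsum_cmult_right pmf_abs_summable)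
  also have "\<dots> = infsetsum (\<lambda>s. \<Sum>\<omega>\<in>\<Omega>. (\<mu> \<omega> * u \<omega>) * pmf (\<pi> \<omega>) s) A"
    by (rule infsetsum_sum_fin[symmetric, OF fin]) (intro abs_summable_on_cmult_right pmf_abs_summable)
  also have "\<dots> \<ge> 0"
  proof (rule infsetsum_nonneg)
    fix s assume s: "s \<in> A"
    show "0 \<le> (\<Sum>\<omega>\<in>\<Omega>. (\<mu> \<omega> * u \<omega>) * pmf (\<pi> \<omega>) s)"
    proof (cases "sig_prob \<Omega> \<mu> \<pi> s = 0")
      case True
      have "\<forall>\<omega>\<in>\<Omega>. \<mu> \<omega> * pmf (\<pi> \<omega>) s = 0"
        using True fin mu unfolding sig_prob_def
        by (subst sum_nonneg_eq_0_iff[symmetric]) auto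
      then have "(\<Sum>\<omega>\<in>\<Omega>. (\<mu> \<omega> * u \<omega>) * pmf (\<pi> \<omega>) s) = 0"
        by (intro sum.neutral) (auto simp: algebra_simps)
      then show ?thesis by simp
    next
      case False
      have "(\<Sum>\<omega>\<in>\<Omega>. (\<mu> \<omega> * u \<omega>) * pmf (\<pi> \<omega>) s)
          = sig_prob \<Omega> \<mu> \<pi> s * (\<Sum>\<omega>\<in>\<Omega>. posterior \<Omega> \<mu> \<pi> s \<omega> * u \<omega>)"
        using False unfolding posterior_def by (simp add: sum_distrib_left algebra_simps)
      moreover have "0 \<le> sig_prob \<Omega> \<mu> \<pi> s"
        unfolding sig_prob_def using mu by (intro sum_nonneg) auto
      moreover have "0 \<le> (\<Sum>\<omega>\<in>\<Omega>. posterior \<Omega> \<mu> \<pi> s \<omega> * u \<omega>)"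
        using s unfolding A_def adopts_def by simp
      ultimately show ?thesis by simp
    qed
  qed
  finally show ?thesis unfolding A_def .
qed

lemma sender_bounds:
  fixes \<Omega> :: "'w set" and \<mu> :: "'w \<Rightarrow> real"
  assumes fin: "finite \<Omega>" and mu: "\<forall>\<omega>\<in>\<Omega>. 0 \<le> \<mu> \<omega>" and one: "(\<Sum>\<omega>\<in>\<Omega>. \<mu> \<omega>) = 1"
  shows "0 \<le> sender_util \<Omega> \<mu> \<pi> u" "sender_util \<Omega> \<mu> \<pi> u \<le> 1"
proof -
  show "0 \<le> sender_util \<Omega> \<mu> \<pi> u" unfolding sender_util_def using mu by (intro sum_nonneg) auto
  have "sender_util \<Omega> \<mu> \<pi> u \<le> (\<Sum>\<omega>\<in>\<Omega>. \<mu> \<omega>)"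
    unfolding sender_util_def using mu
    by (intro sum_mono) (simp add: mult_left_le)
  then show "sender_util \<Omega> \<mu> \<pi> u \<le> 1" using one by simp
qed

lemma opt_bounds:
  fixes \<Omega> :: "'w set" and \<mu> :: "'w \<Rightarrow> real"
  assumes fin: "finite \<Omega>" and mu: "\<forall>\<omega>\<in>\<Omega>. 0 \<le> \<mu> \<omega>" and one: "(\<Sum>\<omega>\<in>\<Omega>. \<mu> \<omega>) = 1"
  shows "sender_util \<Omega> \<mu> \<pi> u \<le> opt_util \<Omega> \<mu> u"
    "(\<And>\<pi>. sender_util \<Omega> \<mu> \<pi> u \<le> c) \<Longrightarrow> opt_util \<Omega> \<mu> u \<le> c"
proof -
  have bdd: "bdd_above (range (\<lambda>\<pi>. sender_util \<Omega> \<mu> \<pi> u))"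
    using sender_bounds[OF assms] by (intro bdd_aboveI[of _ 1]) auto
  show "sender_util \<Omega> \<mu> \<pi> u \<le> opt_util \<Omega> \<mu> u"
    unfolding opt_util_def by (rule cSUP_upper[OF _ bdd]) simp
  show "(\<And>\<pi>. sender_util \<Omega> \<mu> \<pi> u \<le> c) \<Longrightarrow> opt_util \<Omega> \<mu> u \<le> c"
    unfolding opt_util_def by (rule cSUP_least) auto
qed

lemma sender_le_dual:
  fixes \<Omega> :: "'w set" and \<mu> :: "'w \<Rightarrow> real"
  assumes fin: "finite \<Omega>" and mu: "\<forall>\<omega>\<in>\<Omega>. 0 \<le> \<mu> \<omega>" and lam: "0 \<le> t"
  shows "sender_util \<Omega> \<mu> \<pi> u \<le> (\<Sum>\<omega>\<in>\<Omega>. \<mu> \<omega> * max 0 (1 + t * u \<omega>))"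
proof -
  define P where "P \<omega> = measure_pmf.prob (\<pi> \<omega>) {s. adopts \<Omega> \<mu> \<pi> u s}" for \<omega>
  have P: "0 \<le> P \<omega>" "P \<omega> \<le> 1" for \<omega> unfolding P_def by auto
  have "sender_util \<Omega> \<mu> \<pi> u = (\<Sum>\<omega>\<in>\<Omega>. \<mu> \<omega> * P \<omega>)"
    unfolding sender_util_def P_def by simp
  also have "\<dots> \<le> (\<Sum>\<omega>\<in>\<Omega>. \<mu> \<omega> * P \<omega>) + t * (\<Sum>\<omega>\<in>\<Omega>. \<mu> \<omega> * P \<omega> * u \<omega>)"
    using key_nonneg[OF fin mu, of \<pi> u] lam unfolding P_def by simp
  also have "\<dots> = (\<Sum>\<omega>\<in>\<Omega>. \<mu> \<omega> * (P \<omega> * (1 + t * u \<omega>)))"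
    by (simp add: sum_distrib_left sum.distrib algebra_simps)
  also have "\<dots> \<le> (\<Sum>\<omega>\<in>\<Omega>. \<mu> \<omega> * max 0 (1 + t * u \<omega>))"
  proof (rule sum_mono)
    fix \<omega> assume "\<omega> \<in> \<Omega>"
    then have m: "0 \<le> \<mu> \<omega>" using mu by auto
    have "P \<omega> * (1 + t * u \<omega>) \<le> max 0 (1 + t * u \<omega>)"
    proof (cases "0 \<le> 1 + t * u \<omega>")
      case True then show ?thesis using P[of \<omega>] by (simp add: mult_left_le_one_le)
    next
      case False then show ?thesis using P[of \<omega>] by (simp add: mult_nonneg_nonpos)
    qed
    then show "\<mu> \<omega> * (P \<omega> * (1 + t * u \<omega>)) \<le> \<mu> \<omega> * max 0 (1 + t * u \<omega>)"
      using m by (rule mult_left_mono)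
  qed
  finally show ?thesis .
qed


definition sig0 :: "real \<Rightarrow> nat pmf" where
  "sig0 r = map_pmf (\<lambda>b. if b then 1 else 0) (bernoulli_pmf r)"

lemma sig0_pmf1: "0 \<le> r \<Longrightarrow> r \<le> 1 \<Longrightarrow> pmf (sig0 r) 1 = r"
proof -
  assume r: "0 \<le> r" "r \<le> 1"
  have "(\<lambda>b::bool. if b then 1 else (0::nat)) -` {1} = {True}" by (auto split: if_splits)
  then show ?thesis using r unfolding sig0_def pmf_map by (simp add: measure_pmf_single)
qed

lemma sig0_prob: "0 \<le> r \<Longrightarrow> r \<le> 1 \<Longrightarrow> 1 \<in> S \<Longrightarrow> r \<le> measure_pmf.prob (sig0 r) S"
proof -
  assume r: "0 \<le> r" "r \<le> 1" and S: "1 \<in> S"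
  have "r = measure_pmf.prob (sig0 r) {1}" using sig0_pmf1[OF r] by (simp add: measure_pmf_single)
  also have "\<dots> \<le> measure_pmf.prob (sig0 r) S"
    using S by (intro measure_pmf.finite_measure_mono) auto
  finally show ?thesis .
qed

lemma mon_utils_monoP: "u \<in> mon_utils k n \<Longrightarrow> monoP {..<k} n u"
  unfolding mon_utils_def monoP_def states_def by auto

theorem proposition3:
  fixes k :: nat and n :: "nat \<Rightarrow> nat" and m :: "nat \<Rightarrow> nat \<Rightarrow> real"
  assumes "\<forall>j<k. (\<forall>i<n j. m j i > 0) \<and> (\<Sum>i<n j. m j i) = 1"
  shows "reg_mon_md k n (prod_prior k m) \<le> 1 - 1 / 2 ^ k"
proof -
  define I where "I = {..<k}"
  define \<Omega> where "\<Omega> = states k n"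
  define \<mu> where "\<mu> = prod_prior k m"
  have \<Omega>I: "\<Omega> = PiE I (\<lambda>j. {..<n j})" unfolding \<Omega>_def states_def I_def by simp
  have finI: "finite I" unfolding I_def by simp
  have fin: "finite \<Omega>" unfolding \<Omega>I by (intro finite_PiE finI) auto
  have cardI: "card I = k" unfolding I_def by simp
  have mpos: "\<And>j i. j \<in> I \<Longrightarrow> i < n j \<Longrightarrow> 0 < m j i" using assms unfolding I_def by auto
  have msum: "\<And>j. j \<in> I \<Longrightarrow> (\<Sum>i<n j. m j i) = 1" using assms unfolding I_def by auto
  have npos: "\<And>j. j \<in> I \<Longrightarrow> 0 < n j"
  proof -
    fix j assume "j \<in> I"
    from msum[OF this] show "0 < n j" by (cases "n j") auto
  qed
  have "\<forall>j\<in>I. \<exists>ph. fst ph < n j \<and> (\<forall>i<n j. 0 \<le> snd ph i \<and> snd ph i \<le> m j i) \<and> (\<Sum>i<n j. snd ph i) = 1/2 \<and>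
      (\<forall>i<n j. i < fst ph \<longrightarrow> snd ph i = 0) \<and> (\<forall>i<n j. fst ph < i \<longrightarrow> snd ph i = m j i)"
  proof
    fix j assume j: "j \<in> I"
    obtain p h where "p < n j \<and> (\<forall>i<n j. 0 \<le> h i \<and> h i \<le> m j i) \<and> (\<Sum>i<n j. h i) = 1/2 \<and>
      (\<forall>i<n j. i < p \<longrightarrow> h i = 0) \<and> (\<forall>i<n j. p < i \<longrightarrow> h i = m j i)"
      using split_exists[OF npos[OF j], of "m j" "1/2"] mpos[OF j] msum[OF j]
      by (auto simp: less_imp_le)
    then show "\<exists>ph. fst ph < n j \<and> (\<forall>i<n j. 0 \<le> snd ph i \<and> snd ph i \<le> m j i) \<and> (\<Sum>i<n j. snd ph i) = 1/2 \<and>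
      (\<forall>i<n j. i < fst ph \<longrightarrow> snd ph i = 0) \<and> (\<forall>i<n j. fst ph < i \<longrightarrow> snd ph i = m j i)"
      by (intro exI[of _ "(p, h)"]) simp
  qed
  then obtain F where F: "\<forall>j\<in>I. fst (F j) < n j \<and> (\<forall>i<n j. 0 \<le> snd (F j) i \<and> snd (F j) i \<le> m j i) \<and>
      (\<Sum>i<n j. snd (F j) i) = 1/2 \<and>
      (\<forall>i<n j. i < fst (F j) \<longrightarrow> snd (F j) i = 0) \<and> (\<forall>i<n j. fst (F j) < i \<longrightarrow> snd (F j) i = m j i)"
    by (rule bchoice[elim_format]) blast
  define p where "p j = fst (F j)" for j
  define h where "h j = snd (F j)" for j
  define l where "l j i = m j i - h j i" for j i
  have hp: "\<And>j. j \<in> I \<Longrightarrow> p j < n j"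
    and h0: "\<And>j i. j \<in> I \<Longrightarrow> i < n j \<Longrightarrow> 0 \<le> h j i"
    and hm: "\<And>j i. j \<in> I \<Longrightarrow> i < n j \<Longrightarrow> h j i \<le> m j i"
    and hsum: "\<And>j. j \<in> I \<Longrightarrow> (\<Sum>i<n j. h j i) = 1/2"
    and hlow: "\<And>j i. j \<in> I \<Longrightarrow> i < n j \<Longrightarrow> i < p j \<Longrightarrow> h j i = 0"
    and hhigh: "\<And>j i. j \<in> I \<Longrightarrow> i < n j \<Longrightarrow> p j < i \<Longrightarrow> h j i = m j i"
    using F unfolding p_def h_def by auto
  have hs: "hsplit I n h l p"
    unfolding hsplit_def
  proof (intro ballI conjI allI impI)
    fix j assume j: "j \<in> I"
    show "p j < n j" using hp[OF j] .
    fix i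
    show "i < n j \<Longrightarrow> 0 \<le> h j i" using h0[OF j] by auto
    show "i < n j \<Longrightarrow> 0 \<le> l j i" using hm[OF j] unfolding l_def by auto
    show "i < n j \<Longrightarrow> i < p j \<Longrightarrow> h j i = 0" using hlow[OF j] by auto
    show "i < n j \<Longrightarrow> p j < i \<Longrightarrow> l j i = 0" using hhigh[OF j] unfolding l_def by auto
  next
    fix j assume j: "j \<in> I"
    show "(\<Sum>i<n j. h j i) = (\<Sum>i<n j. l j i)"
      unfolding l_def using hsum[OF j] msum[OF j] by (simp add: sum_subtractf)
  qed
  have muI: "\<mu> \<omega> = (\<Prod>j\<in>I. h j (\<omega> j) + l j (\<omega> j))" for \<omega>
    unfolding \<mu>_def prod_prior_def l_def I_def by simp
  have mu0: "\<forall>\<omega>\<in>\<Omega>. 0 \<le> \<mu> \<omega>"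
    unfolding \<Omega>I \<mu>_def prod_prior_def I_def
    using mpos unfolding I_def by (auto intro!: prod_nonneg simp: PiE_def Pi_def less_imp_le)
  have mu1: "(\<Sum>\<omega>\<in>\<Omega>. \<mu> \<omega>) = 1"
  proof -
    have "(\<Sum>\<omega>\<in>\<Omega>. \<mu> \<omega>) = (\<Prod>j\<in>I. \<Sum>i<n j. m j i)"
      unfolding \<Omega>I \<mu>_def prod_prior_def I_def by (subst prod_sum_PiE) auto
    also have "\<dots> = 1" using msum by simp
    finally show ?thesis .
  qed
  have muWS: "(\<Sum>\<omega>\<in>\<Omega>. \<mu> \<omega> * \<phi> \<omega>) = WS I n (\<lambda>j i. h j i + l j i) \<phi>" for \<phi>
    unfolding WS_def \<Omega>I muI ..
  define \<eta> where "\<eta> \<omega> = (\<Prod>j\<in>I. h j (\<omega> j))" for \<omega>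
  have etaWS: "(\<Sum>\<omega>\<in>\<Omega>. \<eta> \<omega> * \<phi> \<omega>) = WS I n h \<phi>" for \<phi>
    unfolding WS_def \<Omega>I \<eta>_def ..
  have eta0: "\<And>\<omega>. \<omega> \<in> \<Omega> \<Longrightarrow> 0 \<le> \<eta> \<omega>"
    unfolding \<Omega>I \<eta>_def using h0 by (auto intro!: prod_nonneg simp: PiE_def Pi_def)
  have etasum: "(\<Sum>\<omega>\<in>\<Omega>. \<eta> \<omega>) = 1 / 2 ^ k"
  proof -
    have "(\<Sum>\<omega>\<in>\<Omega>. \<eta> \<omega>) = (\<Prod>j\<in>I. \<Sum>i<n j. h j i)"
      unfolding \<Omega>I \<eta>_def by (subst prod_sum_PiE) (auto simp: finI)
    also have "\<dots> = (\<Prod>j\<in>I. 1/2)" using hsum by (intro prod.cong) auto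
    also have "\<dots> = 1 / 2 ^ k" using cardI by (simp add: power_one_over)
    finally show ?thesis .
  qed
  define r where "r \<omega> = (\<Prod>j\<in>I. h j (\<omega> j) / m j (\<omega> j))" for \<omega>
  have r01: "0 \<le> r \<omega> \<and> r \<omega> \<le> 1" if "\<omega> \<in> \<Omega>" for \<omega>
  proof -
    have "\<And>j. j \<in> I \<Longrightarrow> 0 \<le> h j (\<omega> j) / m j (\<omega> j) \<and> h j (\<omega> j) / m j (\<omega> j) \<le> 1"
    proof -
      fix j assume j: "j \<in> I"
      then have "\<omega> j < n j" using that unfolding \<Omega>I by (auto simp: PiE_def Pi_def)
      then show "0 \<le> h j (\<omega> j) / m j (\<omega> j) \<and> h j (\<omega> j) / m j (\<omega> j) \<le> 1"
      proof -
        assume w: "\<omega> j < n j"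
        have a: "0 \<le> h j (\<omega> j)" "h j (\<omega> j) \<le> m j (\<omega> j)" "0 < m j (\<omega> j)"
          using h0[OF j w] hm[OF j w] mpos[OF j w] by auto
        then show ?thesis by (simp add: divide_le_eq_1)
      qed
    qed
    then show ?thesis unfolding r_def by (auto intro: prod_nonneg prod_le_1)
  qed
  have mur: "\<mu> \<omega> * r \<omega> = \<eta> \<omega>" if "\<omega> \<in> \<Omega>" for \<omega>
  proof -
    have "\<mu> \<omega> * r \<omega> = (\<Prod>j\<in>I. m j (\<omega> j) * (h j (\<omega> j) / m j (\<omega> j)))"
      unfolding \<mu>_def prod_prior_def r_def I_def by (rule prod.distrib[symmetric])
    also have "\<dots> = \<eta> \<omega>" unfolding \<eta>_def
    proof (intro prod.cong refl)
      fix j assume j: "j \<in> I"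
      then have "\<omega> j < n j" using that unfolding \<Omega>I by (auto simp: PiE_def Pi_def)
      then have "0 < m j (\<omega> j)" using mpos[OF j] by blast
      then show "m j (\<omega> j) * (h j (\<omega> j) / m j (\<omega> j)) = h j (\<omega> j)" by simp
    qed
    finally show ?thesis .
  qed
  define \<pi>0 where "\<pi>0 \<omega> = sig0 (r \<omega>)" for \<omega>
  define g where "g \<pi> u = opt_util \<Omega> \<mu> u - sender_util \<Omega> \<mu> \<pi> u" for \<pi> u
  have main: "g \<pi>0 u \<le> 1 - 1 / 2 ^ k" if u: "u \<in> mon_utils k n" for u
  proof -
    have mono: "monoP I n u" using mon_utils_monoP[OF u] unfolding I_def .
    have snd0: "0 \<le> sender_util \<Omega> \<mu> \<pi> u" and snd1: "sender_util \<Omega> \<mu> \<pi> u \<le> 1" for \<pi>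
      using sender_bounds[OF fin mu0 mu1] by auto
    show ?thesis
    proof (cases "0 \<le> (\<Sum>\<omega>\<in>\<Omega>. \<eta> \<omega> * u \<omega>)")
      case True
      have pmf1: "pmf (\<pi>0 \<omega>) 1 = r \<omega>" if "\<omega> \<in> \<Omega>" for \<omega>
        unfolding \<pi>0_def using r01[OF that] sig0_pmf1 by blast
      have sig: "sig_prob \<Omega> \<mu> \<pi>0 1 = 1 / 2 ^ k"
      proof -
        have "sig_prob \<Omega> \<mu> \<pi>0 1 = (\<Sum>\<omega>\<in>\<Omega>. \<eta> \<omega>)"
          unfolding sig_prob_def using pmf1 mur by (intro sum.cong) auto
        then show ?thesis using etasum by simp
      qed
      have ad: "adopts \<Omega> \<mu> \<pi>0 u 1"
      proof -
        have "(\<Sum>\<omega>\<in>\<Omega>. posterior \<Omega> \<mu> \<pi>0 1 \<omega> * u \<omega>) = (\<Sum>\<omega>\<in>\<Omega>. (\<eta> \<omega> * u \<omega>) * 2 ^ k)"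
          unfolding posterior_def sig using pmf1 mur by (intro sum.cong) auto
        also have "\<dots> = (\<Sum>\<omega>\<in>\<Omega>. \<eta> \<omega> * u \<omega>) * 2 ^ k" by (simp add: sum_distrib_right)
        finally show ?thesis unfolding adopts_def using True by simp
      qed
      have "1 / 2 ^ k = (\<Sum>\<omega>\<in>\<Omega>. \<mu> \<omega> * r \<omega>)" using etasum mur by simp
      also have "\<dots> \<le> sender_util \<Omega> \<mu> \<pi>0 u"
        unfolding sender_util_def
      proof (rule sum_mono)
        fix \<omega> assume w: "\<omega> \<in> \<Omega>"
        have eq: "\<pi>0 \<omega> = sig0 (r \<omega>)" unfolding \<pi>0_def by simp
        have "r \<omega> \<le> measure_pmf.prob (sig0 (r \<omega>)) {s. adopts \<Omega> \<mu> \<pi>0 u s}"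
          using r01[OF w] ad by (intro sig0_prob) auto
        then have "r \<omega> \<le> measure_pmf.prob (\<pi>0 \<omega>) {s. adopts \<Omega> \<mu> \<pi>0 u s}"
          by (subst eq)
        then show "\<mu> \<omega> * r \<omega> \<le> \<mu> \<omega> * measure_pmf.prob (\<pi>0 \<omega>) {s. adopts \<Omega> \<mu> \<pi>0 u s}"
          using mu0 w by (intro mult_left_mono) auto
      qed
      finally have "1 / 2 ^ k \<le> sender_util \<Omega> \<mu> \<pi>0 u" .
      moreover have "opt_util \<Omega> \<mu> u \<le> 1" using opt_bounds(2)[OF fin mu0 mu1] snd1 by blast
      ultimately show ?thesis unfolding g_def by simp
    next
      case False
      define pv where "pv = restrict p I"
      have pvO: "pv \<in> \<Omega>" unfolding pv_def \<Omega>I using hp by auto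
      have jpos: "\<omega> j < n j" if "\<omega> \<in> \<Omega>" "j \<in> I" for \<omega> j
        using that unfolding \<Omega>I by (auto simp: PiE_def Pi_def)
      have above: "u pv \<le> u \<omega>" if w: "\<omega> \<in> \<Omega>" and e: "\<eta> \<omega> \<noteq> 0" for \<omega>
      proof (rule monoP_chain[OF finI mono])
        show "pv \<in> PiE I (\<lambda>j. {..<n j})" using pvO unfolding \<Omega>I .
        show "\<omega> \<in> PiE I (\<lambda>j. {..<n j})" using w unfolding \<Omega>I .
        show "\<forall>j\<in>I. pv j \<le> \<omega> j"
        proof
          fix j assume j: "j \<in> I"
          have "h j (\<omega> j) \<noteq> 0" using e j finI unfolding \<eta>_def by (auto simp: prod_zero_iff)
          then have "\<not> \<omega> j < p j" using hlow[OF j jpos[OF w j]] by auto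
          then show "pv j \<le> \<omega> j" unfolding pv_def using j by simp
        qed
      qed
      have below: "u \<omega> \<le> u pv" if w: "\<omega> \<in> \<Omega>" and e: "(\<Prod>j\<in>I. l j (\<omega> j)) \<noteq> 0" for \<omega>
      proof (rule monoP_chain[OF finI mono])
        show "pv \<in> PiE I (\<lambda>j. {..<n j})" using pvO unfolding \<Omega>I .
        show "\<omega> \<in> PiE I (\<lambda>j. {..<n j})" using w unfolding \<Omega>I .
        show "\<forall>j\<in>I. \<omega> j \<le> pv j"
        proof
          fix j assume j: "j \<in> I"
          have "l j (\<omega> j) \<noteq> 0" using e j finI by (auto simp: prod_zero_iff)
          moreover have "p j < \<omega> j \<longrightarrow> l j (\<omega> j) = 0"
            using hs j jpos[OF w j] unfolding hsplit_def by blast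
          ultimately have "\<not> p j < \<omega> j" by auto
          then show "\<omega> j \<le> pv j" unfolding pv_def using j by simp
        qed
      qed
      have "u pv / 2 ^ k = (\<Sum>\<omega>\<in>\<Omega>. \<eta> \<omega> * u pv)"
        using etasum by (simp add: sum_distrib_right[symmetric])
      also have "\<dots> \<le> (\<Sum>\<omega>\<in>\<Omega>. \<eta> \<omega> * u \<omega>)"
      proof (rule sum_mono)
        fix \<omega> assume w: "\<omega> \<in> \<Omega>"
        show "\<eta> \<omega> * u pv \<le> \<eta> \<omega> * u \<omega>"
        proof (cases "\<eta> \<omega> = 0")
          case False then show ?thesis using above[OF w False] eta0[OF w] by (intro mult_left_mono) auto
        qed simp
      qed
      finally have "u pv / 2 ^ k < 0" using False by linarith
      then have upv: "u pv < 0" by (simp add: divide_less_0_iff)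
      define t where "t = - 1 / u pv"
      have t0: "0 < t" unfolding t_def using upv by simp
      have tpv: "1 + t * u pv = 0" unfolding t_def using upv by simp
      define \<phi> where "\<phi> \<omega> = max 0 (1 + t * u \<omega>)" for \<omega>
      have monophi: "monoP I n \<phi>"
        using mono t0 unfolding monoP_def \<phi>_def
        by (meson max.mono order_refl add_left_mono mult_left_mono less_imp_le)
      have WSl: "WS I n l \<phi> = 0"
        unfolding WS_def \<Omega>I[symmetric]
      proof (rule sum.neutral, rule ballI)
        fix \<omega> assume w: "\<omega> \<in> \<Omega>"
        show "(\<Prod>j\<in>I. l j (\<omega> j)) * \<phi> \<omega> = 0"
        proof (cases "(\<Prod>j\<in>I. l j (\<omega> j)) = 0")
          case False
          have "1 + t * u \<omega> \<le> 1 + t * u pv" using below[OF w False] t0 by simp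
          then have "\<phi> \<omega> = 0" unfolding \<phi>_def using tpv by simp
          then show ?thesis by simp
        qed simp
      qed
      have "WS I n h \<phi> = (\<Sum>\<omega>\<in>\<Omega>. \<eta> \<omega> * (1 + t * u \<omega>))"
        unfolding etaWS[symmetric]
      proof (rule sum.cong[OF refl])
        fix \<omega> assume w: "\<omega> \<in> \<Omega>"
        show "\<eta> \<omega> * \<phi> \<omega> = \<eta> \<omega> * (1 + t * u \<omega>)"
        proof (cases "\<eta> \<omega> = 0")
          case False
          have "1 + t * u pv \<le> 1 + t * u \<omega>" using above[OF w False] t0 by simp
          then show ?thesis unfolding \<phi>_def using tpv by simp
        qed simp
      qed
      also have "\<dots> = (\<Sum>\<omega>\<in>\<Omega>. \<eta> \<omega>) + t * (\<Sum>\<omega>\<in>\<Omega>. \<eta> \<omega> * u \<omega>)"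
        by (simp add: algebra_simps sum.distrib sum_distrib_left)
      also have "\<dots> \<le> 1 / 2 ^ k" using etasum t0 False by (simp add: mult_nonneg_nonpos)
      finally have WSh: "WS I n h \<phi> \<le> 1 / 2 ^ k" .
      have "(\<Sum>\<omega>\<in>\<Omega>. \<mu> \<omega> * \<phi> \<omega>) = WS I n (\<lambda>j i. h j i + l j i) \<phi>" by (rule muWS)
      also have "\<dots> \<le> (2 ^ card I - 1) * WS I n h \<phi>" using domM[OF finI hs monophi] WSl by simp
      also have "\<dots> \<le> (2 ^ k - 1) * (1 / 2 ^ k)"
      proof -
        have "(0::real) \<le> 2 ^ k - 1" by simp
        from mult_left_mono[OF WSh this] show ?thesis using cardI by simp
      qed
      also have "\<dots> = 1 - 1 / 2 ^ k" by (simp add: field_simps)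
      finally have dual: "(\<Sum>\<omega>\<in>\<Omega>. \<mu> \<omega> * \<phi> \<omega>) \<le> 1 - 1 / 2 ^ k" .
      have "opt_util \<Omega> \<mu> u \<le> 1 - 1 / 2 ^ k"
      proof (rule opt_bounds(2)[OF fin mu0 mu1])
        fix \<pi>
        show "sender_util \<Omega> \<mu> \<pi> u \<le> 1 - 1 / 2 ^ k"
          using sender_le_dual[OF fin mu0 less_imp_le[OF t0], where \<pi>=\<pi> and u=u] dual unfolding \<phi>_def by simp
      qed
      then show ?thesis unfolding g_def using snd0[of \<pi>0] by simp
    qed
  qed
  have zero_in: "(\<lambda>_. 0) \<in> mon_utils k n" unfolding mon_utils_def by simp
  have gb: "0 \<le> g \<pi> u \<and> g \<pi> u \<le> 1" for \<pi> u
  proof -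
    have a: "sender_util \<Omega> \<mu> \<pi> u \<le> opt_util \<Omega> \<mu> u" by (rule opt_bounds(1)[OF fin mu0 mu1])
    have b: "opt_util \<Omega> \<mu> u \<le> 1" using opt_bounds(2)[OF fin mu0 mu1] sender_bounds(2)[OF fin mu0 mu1] by blast
    have c: "0 \<le> sender_util \<Omega> \<mu> \<pi> u" by (rule sender_bounds(1)[OF fin mu0 mu1])
    show ?thesis using a b c unfolding g_def by auto
  qed
  have bddA: "bdd_above (g \<pi> ` mon_utils k n)" for \<pi>
    using gb by (intro bdd_aboveI[of _ 1]) auto
  have fge: "0 \<le> (SUP u\<in>mon_utils k n. g \<pi> u)" for \<pi>
    using gb by (intro cSUP_upper2[OF bddA zero_in]) auto
  have "reg_mon_md k n (prod_prior k m) = (INF \<pi>. SUP u\<in>mon_utils k n. g \<pi> u)"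
    unfolding reg_mon_md_def g_def \<Omega>_def \<mu>_def ..
  also have "\<dots> \<le> (SUP u\<in>mon_utils k n. g \<pi>0 u)"
    by (rule cINF_lower) (auto intro!: bdd_belowI[of _ 0] fge)
  also have "\<dots> \<le> 1 - 1 / 2 ^ k"
    using zero_in main by (intro cSUP_least) auto
  finally show ?thesis .
qed

end
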